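(* Let $\mathbf{x}$ be an infinite word over a finite alphabet and $n\ge2$ an integer with $r(n,\mathbf{x})\ge r(n-1,\mathbf{x})+2$. Then $r(n,\mathbf{x})\ge 2n+1$.
   Context: For $\mathbf{x}=x_1x_2\ldots$ and $i\le j$, $x_i^j=x_i\cdots x_j$; $r(n,\mathbf{x})=\min\{m\ge1:\ x_i^{i+n-1}=x_{m-n+1}^{m}\text{ for some } 1\le i\le m-n\}$. *)

theory Defs
  imports Main
begin

text \<open>An infinite word x = x_1 x_2 ... is modelled as a function nat => 'a, where
  the letter at position i (i >= 1) is x i; the value x 0 is never used.\<close>

definition factor :: "(nat \<Rightarrow> 'a) \<Rightarrow> nat \<Rightarrow> nat \<Rightarrow> 'a list" where
  "factor x i j = map x [i..<Suc j]"

definition rep :: "nat \<Rightarrow> (nat \<Rightarrow> 'a) \<Rightarrow> nat" where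
  "rep n x = (LEAST m. m \<ge> 1 \<and>
      (\<exists>i. 1 \<le> i \<and> i + n \<le> m \<and> factor x i (i + n - 1) = factor x (m + 1 - n) m))"

end

theory Submission
  imports Defs
begin

definition per :: "(nat \<Rightarrow> 'a) \<Rightarrow> nat \<Rightarrow> nat \<Rightarrow> nat \<Rightarrow> bool" where
  "per x a b p \<longleftrightarrow> (\<forall>t. a \<le> t \<longrightarrow> t + p \<le> b \<longrightarrow> x t = x (t + p))"

lemma per_iter:
  assumes "per x a b p" "a \<le> t" "t + k * p \<le> b"
  shows "x t = x (t + k * p)"
  using assms(3)
proof (induction k)
  case 0 then show ?case by simp
next
  case (Suc k)
  have "x t = x (t + k * p)" using Suc by simp
  also have "\<dots> = x (t + k * p + p)" using assms(1,2) Suc.prems unfolding per_def by auto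
  finally show ?case by (simp add: add_ac)
qed

lemma per_cong:
  assumes "per x a b p" "a \<le> t" "t \<le> b" "a \<le> u" "u \<le> b" "t mod p = u mod p"
  shows "x t = x u"
proof -
  have main: "x t = x u" if "per x a b p" "a \<le> t" "u \<le> b" "t \<le> u" "t mod p = u mod p" for t u
  proof -
    have "p dvd u - t" using mod_eq_dvd_iff_nat[OF that(4), of p] that(5) by auto
    then obtain k where k: "u - t = p * k" by (auto elim: dvdE)
    then have "u = t + k * p" using that(4) by (simp add: mult.commute)
    moreover have "t + k * p \<le> b" using that(3) calculation by simp
    ultimately show ?thesis using per_iter[OF that(1,2), of k] by simp
  qed
  show ?thesis
  proof (cases "t \<le> u")
    case True show ?thesis by (rule main[OF assms(1,2,5) True assms(6)])
  next
    case False
    then have "u \<le> t" by simp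
    from main[OF assms(1,4,3) this assms(6)[symmetric]] show ?thesis by simp
  qed
qed

lemma per_of_cong:
  assumes "\<And>t u. a \<le> t \<Longrightarrow> t \<le> b \<Longrightarrow> a \<le> u \<Longrightarrow> u \<le> b \<Longrightarrow> t mod g = u mod g \<Longrightarrow> x t = x u"
  shows "per x a b g"
  unfolding per_def
proof (intro allI impI)
  fix t assume t: "a \<le> t" "t + g \<le> b"
  show "x t = x (t + g)" by (rule assms) (use t in simp_all)
qed

lemma per_mono: "per x a b p \<Longrightarrow> a \<le> a' \<Longrightarrow> b' \<le> b \<Longrightarrow> per x a' b' p"
  unfolding per_def by (meson le_trans)

lemma rep_window:
  assumes "0 < (q::nat)" "c + q \<le> d + 1"
  shows "\<exists>t0. c \<le> t0 \<and> t0 \<le> d \<and> t0 mod q = t mod q"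
proof -
  define r where "r = (t + (q - c mod q)) mod q"
  have r: "r < q" unfolding r_def using assms(1) by simp
  have cm: "c mod q < q" using assms(1) by simp
  have dm: "c div q * q + c mod q = c" by (rule div_mult_mod_eq)
  have e0: "t + (c div q + 1) * q = t + c div q * q + q" by (simp add: distrib_right)
  have e: "c + (t + (q - c mod q)) = t + (c div q + 1) * q" using cm dm e0 by linarith
  have "(c + r) mod q = (c + (t + (q - c mod q))) mod q" unfolding r_def by (rule mod_add_right_eq)
  also have "\<dots> = t mod q" unfolding e by (rule mod_mult_self1)
  finally have "(c + r) mod q = t mod q" .
  moreover have "c + r \<le> d" using r assms(2) by linarith
  ultimately show ?thesis by (intro exI[of _ "c + r"]) simp
qed

lemma per_window:
  assumes "per x a b q" "0 < q" "g dvd q" "a \<le> c" "d \<le> b" "c + q \<le> d + 1" "per x c d g"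
  shows "per x a b g"
proof (rule per_of_cong)
  fix t u assume tu: "a \<le> t" "t \<le> b" "a \<le> u" "u \<le> b" "t mod g = u mod g"
  obtain t0 where t0: "c \<le> t0" "t0 \<le> d" "t0 mod q = t mod q" using rep_window[OF assms(2,6)] by blast
  obtain u0 where u0: "c \<le> u0" "u0 \<le> d" "u0 mod q = u mod q" using rep_window[OF assms(2,6)] by blast
  have t0ab: "a \<le> t0" "t0 \<le> b" using t0 assms(4,5) by linarith+
  have u0ab: "a \<le> u0" "u0 \<le> b" using u0 assms(4,5) by linarith+
  have "x t = x t0" by (rule per_cong[OF assms(1) tu(1,2) t0ab t0(3)[symmetric]])
  moreover have "x u = x u0" by (rule per_cong[OF assms(1) tu(3,4) u0ab u0(3)[symmetric]])
  moreover have "t0 mod g = u0 mod g"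
  proof -
    have "t0 mod g = t0 mod q mod g" by (rule mod_mod_cancel[OF assms(3), symmetric])
    also have "\<dots> = t mod q mod g" using t0(3) by simp
    also have "\<dots> = t mod g" by (rule mod_mod_cancel[OF assms(3)])
    also have "\<dots> = u mod g" by (rule tu(5))
    also have "\<dots> = u mod q mod g" by (rule mod_mod_cancel[OF assms(3), symmetric])
    also have "\<dots> = u0 mod q mod g" using u0(3) by simp
    also have "\<dots> = u0 mod g" by (rule mod_mod_cancel[OF assms(3)])
    finally show ?thesis .
  qed
  then have "x t0 = x u0" by (rule per_cong[OF assms(7) t0(1,2) u0(1,2)])
  ultimately show "x t = x u" by simp
qed

lemma fw_le:
  assumes "per x a b p" "per x a b q" "0 < p" "p \<le> q" "p + q \<le> b + 1 - a + gcd p q"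
  shows "per x a b (gcd p q)"
  using assms
proof (induction "p + q" arbitrary: p q b rule: less_induct)
  case less
  show ?case
  proof (cases "p = q")
    case True then show ?thesis using less.prems(1) by simp
  next
    case False
    then have pq: "p < q" using less.prems(4) by simp
    have gp: "gcd p q \<le> p" using less.prems(3) by (simp add: gcd_le1_nat)
    have ab: "a + q \<le> b + 1" using less.prems(5) gp pq by linarith
    define d where "d = gcd p q"
    have gd: "gcd (q - p) p = gcd q p" by (rule gcd_diff1_nat) (use pq in simp)
    have d_eq: "gcd p (q - p) = d" unfolding d_def using gd by (simp add: ac_simps)
    have s1: "per x a (b - p) p" using less.prems(1) by (rule per_mono) auto
    have s2: "per x a (b - p) (q - p)" unfolding per_def
    proof (intro allI impI)
      fix t assume t: "a \<le> t" "t + (q - p) \<le> b - p"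
      have "x t = x (t + q)" using less.prems(2)[unfolded per_def, rule_format, of t] t pq ab by linarith
      moreover have "x (t + (q - p)) = x (t + (q - p) + p)"
        using less.prems(1)[unfolded per_def, rule_format, of "t + (q - p)"] t pq ab by linarith
      ultimately show "x t = x (t + (q - p))" using pq by simp
    qed
    have d_dvd: "d dvd q - p" using d_eq by (metis gcd_dvd2)
    have dpos: "0 < d" unfolding d_def using less.prems(3) by simp
    have "d \<le> q - p" using d_dvd pq by (simp add: dvd_imp_le)
    have cond: "p + (q - p) \<le> (b - p) + 1 - a + d" using less.prems(5) pq ab unfolding d_def by linarith
    have lt: "p + (q - p) < p + q" using pq less.prems(3) by simp
    have cond': "p + (q - p) \<le> (b - p) + 1 - a + gcd p (q - p)" using cond d_eq by simp
    have sub: "per x a (b - p) d"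
    proof (cases "p \<le> q - p")
      case True
      have "per x a (b - p) (gcd p (q - p))"
        by (rule less.hyps[OF lt s1 s2 less.prems(3) True cond'])
      then show ?thesis using d_eq by simp
    next
      case False
      have lt2: "(q - p) + p < p + q" using lt by simp
      have c2: "(q - p) + p \<le> (b - p) + 1 - a + gcd (q - p) p" using cond' by (simp add: gcd.commute add.commute)
      have "per x a (b - p) (gcd (q - p) p)"
      proof (rule less.hyps[OF lt2 s2 s1])
        show "0 < q - p" using pq by simp
        show "q - p \<le> p" using False by simp
        show "q - p + p \<le> b - p + 1 - a + gcd (q - p) p" by (rule c2)
      qed
      then show ?thesis using d_eq by (simp add: gcd.commute)
    qed
    have ddvd: "d dvd p" unfolding d_def by simp
    have win: "a + p \<le> b - p + 1" using \<open>d \<le> q - p\<close> cond ab pq by linarith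
    have "per x a b d"
      by (rule per_window[OF less.prems(1) less.prems(3) ddvd order_refl diff_le_self win sub])
    then show ?thesis unfolding d_def .
  qed
qed

lemma fw:
  assumes "per x a b p" "per x a b q" "0 < p" "0 < q" "p + q \<le> b + 1 - a + gcd p q"
  shows "per x a b (gcd p q)"
proof (cases "p \<le> q")
  case True show ?thesis using fw_le[OF assms(1,2,3) True assms(5)] .
next
  case False
  have c: "q + p \<le> b + 1 - a + gcd q p" using assms(5) by (simp add: gcd.commute add.commute)
  have "per x a b (gcd q p)" by (rule fw_le[OF assms(2,1,4)]) (use False c in auto)
  then show ?thesis by (simp add: gcd.commute)
qed

definition rp :: "nat \<Rightarrow> (nat \<Rightarrow> 'a) \<Rightarrow> nat \<Rightarrow> bool" where
  "rp n x m \<longleftrightarrow> m \<ge> 1 \<and>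
      (\<exists>i. 1 \<le> i \<and> i + n \<le> m \<and> factor x i (i + n - 1) = factor x (m + 1 - n) m)"

lemma rep_rp: "rep n x = (LEAST m. rp n x m)"
  unfolding rep_def rp_def by simp

lemma factor_eq:
  assumes "1 \<le> n" "n \<le> m"
  shows "factor x i (i + n - 1) = factor x (m + 1 - n) m \<longleftrightarrow> (\<forall>k<n. x (i + k) = x (m + 1 - n + k))"
  using assms unfolding factor_def by (auto simp: list_eq_iff_nth_eq simp del: upt_Suc)

lemma rp_iff:
  assumes "1 \<le> n"
  shows "rp n x m \<longleftrightarrow> (\<exists>i. 1 \<le> i \<and> i + n \<le> m \<and> (\<forall>k<n. x (i + k) = x (m + 1 - n + k)))"
proof
  assume "rp n x m"
  then obtain i where "1 \<le> i" "i + n \<le> m" "factor x i (i + n - 1) = factor x (m + 1 - n) m"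
    unfolding rp_def by blast
  moreover have "n \<le> m" using calculation(2) by simp
  ultimately show "\<exists>i. 1 \<le> i \<and> i + n \<le> m \<and> (\<forall>k<n. x (i + k) = x (m + 1 - n + k))"
    using factor_eq[OF assms, of m x i] by blast
next
  assume "\<exists>i. 1 \<le> i \<and> i + n \<le> m \<and> (\<forall>k<n. x (i + k) = x (m + 1 - n + k))"
  then obtain i where "1 \<le> i" "i + n \<le> m" "\<forall>k<n. x (i + k) = x (m + 1 - n + k)" by blast
  then show "rp n x m" unfolding rp_def using factor_eq[OF assms, of m x i] by auto
qed

lemma rp_exists:
  assumes "finite (range x)" "1 \<le> n"
  shows "\<exists>m. rp n x m"
proof -
  define f where "f t = factor x (Suc t) (t + n)" for t
  have "range f \<subseteq> {xs. set xs \<subseteq> range x \<and> length xs = n}"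
    unfolding f_def factor_def using assms(2) by auto
  then have "finite (range f)"
    using finite_lists_length_eq[OF assms(1), of n] by (rule finite_subset)
  then have "\<not> inj f" using finite_imageD infinite_UNIV_nat by blast
  then obtain t1 t2 where t: "t1 \<noteq> t2" "f t1 = f t2" unfolding inj_def by blast
  have "\<exists>t1 t2. t1 < t2 \<and> f t1 = f t2"
    using t by (metis linorder_neqE_nat)
  then obtain a b where ab: "a < b" "f a = f b" by blast
  have "rp n x (b + n)" unfolding rp_def
    apply (rule conjI) using assms apply simp
    apply (rule exI[of _ "Suc a"]) using ab assms unfolding f_def by (auto simp: add.commute)
  then show ?thesis by blast
qed

lemma rep_props:
  assumes "finite (range x)" "1 \<le> n"
  shows "rp n x (rep n x)" "\<And>e. rp n x e \<Longrightarrow> rep n x \<le> e"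
  using rp_exists[OF assms] unfolding rep_rp by (auto intro: LeastI_ex Least_le)

theorem lemma5p4:
  fixes x :: "nat \<Rightarrow> 'a" and n :: nat
  assumes "finite (range x)"
    and "n \<ge> 2"
    and "rep n x \<ge> rep (n - 1) x + 2"
  shows "rep n x \<ge> 2 * n + 1"
proof (rule ccontr)
  define m where "m = rep n x"
  define m' where "m' = rep (n - 1) x"
  assume "\<not> ?thesis"
  then have m2n: "m \<le> 2 * n" unfolding m_def by simp
  have mm': "m' + 2 \<le> m" using assms(3) unfolding m_def m'_def by simp
  have n1: "1 \<le> n" "1 \<le> n - 1" using assms(2) by auto
  have minm: "m \<le> e" if "rp n x e" for e using rep_props(2)[OF assms(1) n1(1) that] m_def by simp
  obtain i where i: "1 \<le> i" "i + n \<le> m" "\<forall>k<n. x (i + k) = x (m + 1 - n + k)"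
    using rep_props(1)[OF assms(1) n1(1)] rp_iff[OF n1(1)] m_def by blast
  obtain j where j: "1 \<le> j" "j + (n - 1) \<le> m'" "\<forall>k<n - 1. x (j + k) = x (m' + 1 - (n - 1) + k)"
    using rep_props(1)[OF assms(1) n1(2)] rp_iff[OF n1(2)] m'_def by blast
  define p where "p = m + 1 - n - i"
  define s where "s = m' + 1 - (n - 1) - j"
  have p1: "1 \<le> p" and ip: "m + 1 - n = i + p" using i unfolding p_def by auto
  have s1: "1 \<le> s" and js: "m' + 1 - (n - 1) = j + s" using j assms(2) unfolding s_def by auto
  have perA: "per x i m p" unfolding per_def
  proof (intro allI impI)
    fix t assume t: "i \<le> t" "t + p \<le> m"
    then have "t - i < n" using i ip by linarith
    then have "x (i + (t - i)) = x (m + 1 - n + (t - i))" using i by blast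
    moreover have "i + (t - i) = t" "m + 1 - n + (t - i) = t + p" using t ip by linarith+
    ultimately show "x t = x (t + p)" by simp
  qed
  have perB: "per x j m' s" unfolding per_def
  proof (intro allI impI)
    fix t assume t: "j \<le> t" "t + s \<le> m'"
    then have "t - j < n - 1" using j js by linarith
    then have "x (j + (t - j)) = x (m' + 1 - (n - 1) + (t - j))" using j by blast
    moreover have "j + (t - j) = t" "m' + 1 - (n - 1) + (t - j) = t + s" using t js by linarith+
    ultimately show "x t = x (t + s)" by simp
  qed
  define c where "c = max i j"
  define g where "g = gcd p s"
  have gpos: "0 < g" unfolding g_def using p1 by simp
  have g1: "1 \<le> g" using gpos by simp
  have ovl: "c + p + s \<le> m' + 2" unfolding c_def
    using m2n mm' i j p_def s_def ip js assms(2) by (simp add: max_def) linarith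
  have perI: "per x c m' g" unfolding g_def
  proof (rule fw)
    show "per x c m' p" by (rule per_mono[OF perA]) (use mm' in \<open>auto simp: c_def\<close>)
    show "per x c m' s" by (rule per_mono[OF perB]) (auto simp: c_def)
    show "p + s \<le> m' + 1 - c + gcd p s" using ovl g1 g_def by linarith
  qed (use p1 s1 in auto)
  have perBg: "per x j m' g"
    by (rule per_window[OF perB _ _ _ _ _ perI]) (use s1 ovl p1 in \<open>auto simp: g_def c_def\<close>)
  have perAg: "per x i m g"
    by (rule per_window[OF perA _ _ _ _ _ perI]) (use s1 ovl p1 mm' in \<open>auto simp: g_def c_def\<close>)
  have gs: "g = s"
  proof (rule ccontr)
    assume "g \<noteq> s"
    moreover have "g \<le> s" unfolding g_def using s1 by (simp add: gcd_le2_nat)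
    ultimately have "g < s" by simp
    have "rp n x (j + g + n - 1)" unfolding rp_iff[OF n1(1)]
    proof (intro exI conjI allI impI)
      show "1 \<le> j" "j + n \<le> j + g + n - 1" using j g1 by auto
      fix k assume "k < n"
      then have "x (j + k) = x (j + k + g)" using perBg \<open>g < s\<close> js j unfolding per_def by auto
      then show "x (j + k) = x (j + g + n - 1 + 1 - n + k)" using g1 n1 by (simp add: algebra_simps)
    qed
    then have "m \<le> j + g + n - 1" by (rule minm)
    then show False using \<open>g < s\<close> js mm' j by linarith
  qed
  have sp: "s = p"
  proof (rule ccontr)
    assume "s \<noteq> p"
    moreover have "g \<le> p" unfolding g_def using p1 by (simp add: gcd_le1_nat)
    ultimately have "s < p" using gs by simp
    have "rp n x (i + s + n - 1)" unfolding rp_iff[OF n1(1)]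
    proof (intro exI conjI allI impI)
      show "1 \<le> i" "i + n \<le> i + s + n - 1" using i s1 by auto
      fix k assume "k < n"
      then have "x (i + k) = x (i + k + s)" using perAg gs \<open>s < p\<close> ip i unfolding per_def by auto
      then show "x (i + k) = x (i + s + n - 1 + 1 - n + k)" using s1 n1 by (simp add: algebra_simps)
    qed
    then have "m \<le> i + s + n - 1" by (rule minm)
    then show False using \<open>s < p\<close> ip i by linarith
  qed
  have ext: "x (m' + 1 - p) = x (m' + 1)"
  proof -
    have "i \<le> m' + 1 - p" "m' + 1 - p + p \<le> m" using ip j mm' m2n sp js by linarith+
    then have "x (m' + 1 - p) = x (m' + 1 - p + p)" using perA unfolding per_def by blast
    moreover have "m' + 1 - p + p = m' + 1" using js sp j by linarith
    ultimately show ?thesis by simp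
  qed
  have "rp n x (m' + 1)" unfolding rp_iff[OF n1(1)]
  proof (intro exI conjI allI impI)
    show "1 \<le> j" "j + n \<le> m' + 1" using j n1 by auto
    fix k assume k: "k < n"
    have e: "m' + 1 + 1 - n + k = j + k + s" using js n1 j by linarith
    show "x (j + k) = x (m' + 1 + 1 - n + k)"
    proof (cases "k < n - 1")
      case True
      then have "x (j + k) = x (j + k + s)" using perB js j unfolding per_def by auto
      then show ?thesis using e by (simp add: ac_simps)
    next
      case False
      then have "j + k = m' + 1 - p" "j + k + s = m' + 1" using k js sp j by linarith+
      then show ?thesis using ext e by simp
    qed
  qed
  then have "m \<le> m' + 1" by (rule minm)
  then show False using mm' by simp
qed

end
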